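(* Let $F$ be the $\mathbb{C}$-linear anti-automorphism of $\mathcal{A}_0$ determined by $F(xy)=F(y)F(x)$, $F(a)=a$, $F(b)=-b$, $F(1)=1$. Then $F$ extends to a continuous anti-automorphism $F_{conv}$ of $\tilde{\mathcal{A}}_{conv.}$ given by $F_{conv}(a^pb^q)=(-1)^qb^qa^p$.
   Context: $\mathcal{A}_0$ is the $\mathbb{C}$-algebra of polynomials in $a,b$ subject to $ab-ba=b^2$. $\tilde{\mathcal{A}}_{conv.}$ is the algebra of formal series $\sum\gamma_{p,q}a^pb^q$ (product extending that of $\mathcal{A}_0$) such that $|\gamma_{p,q}|\le C_RR^{p+q}q!$ for some $R>1$, $C_R>0$; it can equivalently be described as the series $\sum\delta_{p,q}b^qa^p$ with $|\delta_{p,q}|\le D_RR^{p+q}q!$. It carries its natural inductive limit topology defined by these bounds. *)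

theory Defs
  imports "HOL-Analysis.Analysis"
begin

text \<open>A formal series \<open>\<Sum> \<gamma>_{p,q} a^p b^q\<close> is represented by its coefficient
  function \<open>\<gamma> p q\<close> (coefficient of the normally ordered monomial \<open>a^p b^q\<close>).\<close>

type_synonym ser = "nat \<Rightarrow> nat \<Rightarrow> complex"

definition mon :: "nat \<Rightarrow> nat \<Rightarrow> ser" where
  "mon p q = (\<lambda>m n. if m = p \<and> n = q then 1 else 0)"

definition ser_add :: "ser \<Rightarrow> ser \<Rightarrow> ser" where
  "ser_add x y = (\<lambda>p q. x p q + y p q)"

definition ser_scale :: "complex \<Rightarrow> ser \<Rightarrow> ser" where
  "ser_scale c x = (\<lambda>p q. c * x p q)"

text \<open>Normal form of \<open>a^p b^q \<cdot> a^r b^s\<close> in \<open>\<A>_0\<close> (relation \<open>ab - ba = b^2\<close>),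
  using \<open>b^q a = a b^q - q b^(q+1)\<close>.\<close>

fun mm :: "nat \<Rightarrow> nat \<Rightarrow> nat \<Rightarrow> nat \<Rightarrow> ser" where
  "mm p q 0 s = mon p (q + s)"
| "mm p q (Suc r) s = (\<lambda>m n. mm (Suc p) q r s m n - of_nat q * mm p (Suc q) r s m n)"

text \<open>Product of formal series extending the product of \<open>\<A>_0\<close>
  (coefficientwise the sum is finite, by homogeneity).\<close>

definition ser_mult :: "ser \<Rightarrow> ser \<Rightarrow> ser" where
  "ser_mult x y = (\<lambda>m n. infsum (\<lambda>(p, q, r, s). x p q * y r s * mm p q r s m n) UNIV)"

definition conv :: "ser set" where
  "conv = {\<gamma>. \<exists>R::real. R > 1 \<and> (\<exists>C::real. \<forall>p q. cmod (\<gamma> p q) \<le> C * R ^ (p + q) * fact q)}"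

text \<open>Closed \<open>\<epsilon>\<close>-ball of the Banach step \<open>B_R\<close> (norm \<open>sup |\<gamma>_{p,q}|/(R^{p+q} q!)\<close>).\<close>

definition step_ball :: "real \<Rightarrow> real \<Rightarrow> ser set" where
  "step_ball R \<epsilon> = {\<gamma>. \<forall>p q. cmod (\<gamma> p q) \<le> \<epsilon> * R ^ (p + q) * fact q}"

definition abs_convex :: "ser set \<Rightarrow> bool" where
  "abs_convex W \<longleftrightarrow> (\<forall>x\<in>W. \<forall>y\<in>W. \<forall>s t::complex. cmod s + cmod t \<le> 1 \<longrightarrow>
      ser_add (ser_scale s x) (ser_scale t y) \<in> W)"

text \<open>Zero neighbourhoods of the locally convex inductive limit topology:
  sets containing an absolutely convex set that contains a ball of every step \<open>B_R\<close>.\<close>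

definition conv_nhd0 :: "ser set \<Rightarrow> bool" where
  "conv_nhd0 U \<longleftrightarrow> (\<exists>W. W \<subseteq> U \<and> W \<subseteq> conv \<and> abs_convex W \<and>
      (\<forall>R>1. \<exists>\<epsilon>>0. step_ball R \<epsilon> \<subseteq> W))"

definition conv_open :: "ser set \<Rightarrow> bool" where
  "conv_open S \<longleftrightarrow> S \<subseteq> conv \<and> (\<forall>x\<in>S. \<exists>N. conv_nhd0 N \<and> (\<forall>n\<in>N. ser_add x n \<in> S))"

definition conv_topology :: "ser topology" where
  "conv_topology = topology conv_open"

definition F_conv :: "ser \<Rightarrow> ser" where
  "F_conv \<gamma> = (\<lambda>m n. infsum (\<lambda>(p, q). (-1) ^ q * \<gamma> p q * ser_mult (mon 0 q) (mon p 0) m n) UNIV)"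

end

theory Submission imports Defs begin

definition T :: "nat \<Rightarrow> (nat \<times> nat) set" where "T d = {(p,q). p + q = d}"
definition Q :: "nat \<Rightarrow> (nat \<times> nat \<times> nat \<times> nat) set" where
  "Q d = {(p,q,r,s). p + q + r + s = d}"

lemma finite_T[simp]: "finite (T d)"
  by (rule finite_subset[of _ "{..d} \<times> {..d}"]) (auto simp: T_def)

lemma finite_Q[simp]: "finite (Q d)"
  by (rule finite_subset[of _ "{..d} \<times> {..d} \<times> {..d} \<times> {..d}"]) (auto simp: Q_def)

lemma mm_deg: "mm p q r s m n \<noteq> 0 \<Longrightarrow> m + n = p + q + r + s"
proof (induction r arbitrary: p q)
  case 0 then show ?case by (auto simp: mon_def split: if_splits)
next
  case (Suc r)
  then show ?case by (cases "mm (Suc p) q r s m n = 0") fastforce+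
qed

lemma fact_mult_le_real: "(fact q * fact s :: real) \<le> fact (q + s)"
proof (induction s)
  case 0 then show ?case by simp
next
  case (Suc s)
  have "(fact q * fact (Suc s) :: real) = of_nat (Suc s) * (fact q * fact s)" by simp
  also have "\<dots> \<le> of_nat (Suc (q + s)) * fact (q + s)"
    by (rule mult_mono) (use Suc in auto)
  finally show ?case by simp
qed

lemma mm_deg': "m + n \<noteq> p + q + r + s \<Longrightarrow> mm p q r s m n = 0"
  using mm_deg by blast

lemma mm_bound: "cmod (mm p q r s m n) * fact q * fact s \<le> 2 ^ r * fact n"
proof (induction r arbitrary: p q)
  case 0
  have "(fact q * fact s :: real) \<le> fact (q + s)"
    by (rule fact_mult_le_real)
  then show ?case by (auto simp: mon_def)
next
  case (Suc r)
  let ?A = "cmod (mm (Suc p) q r s m n)" and ?B = "cmod (mm p (Suc q) r s m n)"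
  have 1: "cmod (mm p q (Suc r) s m n) \<le> ?A + of_nat q * ?B"
    by (simp add: norm_triangle_ineq4[THEN order_trans] norm_mult)
  have 2: "?A * fact q * fact s \<le> 2 ^ r * fact n" using Suc[of "Suc p" q] .
  have 3: "?B * fact (Suc q) * fact s \<le> 2 ^ r * fact n" using Suc[of p "Suc q"] .
  have 4: "of_nat q * ?B * fact q * fact s \<le> ?B * fact (Suc q) * fact s"
  proof -
    have "0 \<le> ?B * fact q * fact s" by simp
    then have "of_nat q * (?B * fact q * fact s) \<le> (1 + of_nat q) * (?B * fact q * fact s)"
      by (intro mult_right_mono) auto
    then show ?thesis by (simp add: algebra_simps)
  qed
  have "cmod (mm p q (Suc r) s m n) * fact q * fact s \<le> (?A + of_nat q * ?B) * fact q * fact s"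
    using 1 by (simp add: mult_right_mono)
  also have "\<dots> = ?A * fact q * fact s + of_nat q * ?B * fact q * fact s" by (simp add: algebra_simps)
  also have "\<dots> \<le> 2 ^ Suc r * fact n" using 2 3 4 by simp
  finally show ?case .
qed

lemma ser_mult_fin:
  "ser_mult x y m n = (\<Sum>(p,q,r,s)\<in>Q (m+n). x p q * y r s * mm p q r s m n)"
proof -
  have "ser_mult x y m n = infsum (\<lambda>(p, q, r, s). x p q * y r s * mm p q r s m n) (Q (m+n))"
    unfolding ser_mult_def
    by (rule infsum_cong_neutral) (auto simp: Q_def mm_deg')
  then show ?thesis by simp
qed

lemma mon_mult: "ser_mult (mon a b) (mon c d) = mm a b c d"
proof (intro ext)
  fix m n
  show "ser_mult (mon a b) (mon c d) m n = mm a b c d m n"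
  proof (cases "mm a b c d m n = 0")
    case True
    then show ?thesis by (simp only: ser_mult_fin True) (intro sum.neutral, auto simp: mon_def True)
  next
    case False
    then have "(a,b,c,d) \<in> Q (m+n)" using mm_deg[OF False] by (simp add: Q_def)
    then show ?thesis unfolding ser_mult_fin
      by (subst sum.remove[of _ "(a,b,c,d)"]) (auto simp: mon_def split: if_splits intro!: sum.neutral)
  qed
qed

lemma F_fin: "F_conv g m n = (\<Sum>(p,q)\<in>T (m+n). (-1) ^ q * g p q * mm 0 q p 0 m n)"
proof -
  have "F_conv g m n = infsum (\<lambda>(p, q). (-1) ^ q * g p q * mm 0 q p 0 m n) (T (m+n))"
    unfolding F_conv_def mon_mult
    by (rule infsum_cong_neutral) (auto simp: T_def mm_deg')
  then show ?thesis by simp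
qed

definition Lf :: "(nat \<Rightarrow> nat \<Rightarrow> complex) \<Rightarrow> ser \<Rightarrow> nat \<Rightarrow> complex" where
  "Lf g w d = (\<Sum>(m,n)\<in>T d. w m n * g m n)"

lemma Lf_mult: "Lf g (ser_mult x y) d = (\<Sum>(p,q,r,s)\<in>Q d. x p q * y r s * Lf g (mm p q r s) d)"
proof -
  have "Lf g (ser_mult x y) d = (\<Sum>(m,n)\<in>T d. \<Sum>(p,q,r,s)\<in>Q d. x p q * y r s * mm p q r s m n * g m n)"
    unfolding Lf_def by (intro sum.cong refl) (auto simp: T_def ser_mult_fin sum_distrib_right case_prod_unfold)
  also have "\<dots> = (\<Sum>(p,q,r,s)\<in>Q d. \<Sum>(m,n)\<in>T d. x p q * y r s * mm p q r s m n * g m n)"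
    unfolding case_prod_unfold by (rule sum.swap)
  also have "\<dots> = (\<Sum>(p,q,r,s)\<in>Q d. x p q * y r s * Lf g (mm p q r s) d)"
    unfolding Lf_def by (intro sum.cong refl) (auto simp: sum_distrib_left mult.assoc case_prod_unfold)
  finally show ?thesis .
qed

lemma Lf_F: "Lf g (F_conv w) d = (\<Sum>(p,q)\<in>T d. (-1) ^ q * w p q * Lf g (mm 0 q p 0) d)"
proof -
  have "Lf g (F_conv w) d = (\<Sum>(m,n)\<in>T d. \<Sum>(p,q)\<in>T d. (-1) ^ q * w p q * mm 0 q p 0 m n * g m n)"
    unfolding Lf_def by (intro sum.cong refl) (auto simp: T_def F_fin sum_distrib_right case_prod_unfold)
  also have "\<dots> = (\<Sum>(p,q)\<in>T d. \<Sum>(m,n)\<in>T d. (-1) ^ q * w p q * mm 0 q p 0 m n * g m n)"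
    unfolding case_prod_unfold by (rule sum.swap)
  also have "\<dots> = (\<Sum>(p,q)\<in>T d. (-1) ^ q * w p q * Lf g (mm 0 q p 0) d)"
    unfolding Lf_def by (intro sum.cong refl) (auto simp: sum_distrib_left mult.assoc case_prod_unfold)
  finally show ?thesis .
qed

lemma Lf_diff: "Lf g (\<lambda>m n. a m n - c * b m n) d = Lf g a d - c * Lf g b d"
  unfolding Lf_def by (simp add: case_prod_unfold algebra_simps sum_subtractf sum_distrib_left)

lemma Lf_mon: "Lf g (mon p q) d = (if p + q = d then g p q else 0)"
proof -
  have "Lf g (mon p q) d = (\<Sum>x\<in>T d. if x = (p,q) then g p q else 0)"
    unfolding Lf_def mon_def by (intro sum.cong refl) (auto split: if_splits)
  also have "\<dots> = (if p + q = d then g p q else 0)"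
    by (subst sum.delta[OF finite_T]) (simp add: T_def)
  finally show ?thesis .
qed

definition ag :: "complex \<Rightarrow> nat \<Rightarrow> nat \<Rightarrow> complex" where
  "ag z = (\<lambda>m n. pochhammer (z + of_nat n) m)"
definition fg :: "complex \<Rightarrow> nat \<Rightarrow> nat \<Rightarrow> complex" where
  "fg z = (\<lambda>m n. (-1) ^ n * pochhammer z m)"

lemma act_mm: "Lf (ag z) (mm p q r s) d =
  (if p + q + r + s = d then pochhammer (z + of_nat s) r * pochhammer (z + of_nat (s + r + q)) p else 0)"
proof (induction r arbitrary: p q)
  case 0
  then show ?case by (simp add: Lf_mon ag_def add.commute add.left_commute)
next
  case (Suc r)
  have e1: "pochhammer (z + of_nat (s + r + q)) (Suc p) = (z + of_nat (s + r + q)) * pochhammer (z + of_nat (s + r + Suc q)) p"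
    by (simp add: pochhammer_rec ac_simps)
  have e2: "pochhammer (z + of_nat s) (Suc r) = (z + of_nat s + of_nat r) * pochhammer (z + of_nat s) r"
    by (simp add: pochhammer_rec')
  have e3: "z + of_nat (s + Suc r + q) = z + of_nat (s + r + Suc q)" by simp
  show ?case
    by (simp only: mm.simps Lf_diff Suc e1 e2 e3) (auto simp: algebra_simps)
qed

lemma actF_mm: "Lf (fg z) (mm p q r s) d =
  (if p + q + r + s = d then (-1) ^ (q + s) * pochhammer z p * pochhammer (z + of_nat (p + q)) r else 0)"
proof (induction r arbitrary: p q)
  case 0
  then show ?case by (simp add: Lf_mon fg_def)
next
  case (Suc r)
  have e1: "pochhammer z (Suc p) = (z + of_nat p) * pochhammer z p"
    by (simp add: pochhammer_rec')
  have e2: "pochhammer (z + of_nat (p + q)) (Suc r) = (z + of_nat (p + q)) * pochhammer (z + of_nat (Suc p + q)) r"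
    by (simp add: pochhammer_rec ac_simps)
  have e3: "z + of_nat (p + Suc q) = z + of_nat (Suc p + q)" by simp
  show ?case
    by (simp only: mm.simps Lf_diff Suc e1 e2 e3) (auto simp: algebra_simps)
qed

lemma faithful:
  assumes "\<And>d z. Lf (ag z) w d = 0"
  shows "w p q = 0"
proof -
  define d where "d = p + q"
  have "i \<le> d \<longrightarrow> w i (d - i) = 0" for i
  proof (induction i rule: less_induct)
    case (less i)
    show ?case
    proof
      assume id: "i \<le> d"
      define z :: complex where "z = of_nat (i + 1) - of_nat d"
      have "Lf (ag z) w d = (\<Sum>x\<in>T d. if x = (i, d - i) then w i (d - i) * fact i else 0)"
        unfolding Lf_def
      proof (intro sum.cong refl, clarify)
        fix m n assume mn: "(m, n) \<in> T d"
        then have nd: "n = d - m" "m \<le> d" by (auto simp: T_def)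
        consider "m < i" | "m = i" | "m > i" by linarith
        then show "w m n * ag z m n = (if (m, n) = (i, d - i) then w i (d - i) * fact i else 0)"
        proof cases
          case 1
          then show ?thesis using less.IH[of m] nd id by auto
        next
          case 2
          have "z + of_nat n = 1" using nd id 2 by (simp add: z_def of_nat_diff)
          then show ?thesis using 2 nd by (simp add: ag_def pochhammer_fact)
        next
          case 3
          have "z + of_nat n = - of_nat (m - i - 1)" using nd id 3 by (simp add: z_def of_nat_diff)
          moreover have "m - i - 1 < m" using 3 by simp
          ultimately have "pochhammer (z + of_nat n) m = 0"
            by (subst pochhammer_eq_0_iff) blast
          then show ?thesis using 3 by (simp add: ag_def)
        qed
      qed
      also have "\<dots> = w i (d - i) * fact i"
        by (subst sum.delta[OF finite_T]) (simp add: T_def id)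
      finally have "w i (d - i) * fact i = 0" using assms by simp
      then show "w i (d - i) = 0" by simp
    qed
  qed
  from this[of p] show ?thesis by (simp add: d_def)
qed

lemma faithful_eq:
  assumes "\<And>d z. Lf (ag z) u d = Lf (ag z) v d"
  shows "u = v"
proof (intro ext)
  fix p q
  have "(\<lambda>m n. u m n - 1 * v m n) p q = 0"
    by (rule faithful) (simp only: Lf_diff assms, simp)
  then show "u p q = v p q" by simp
qed

lemma G_lemma:
  fixes f :: "nat \<Rightarrow> nat \<Rightarrow> nat \<Rightarrow> complex" and g :: "nat \<Rightarrow> nat \<Rightarrow> complex"
  shows "(\<Sum>e\<le>d. (\<Sum>(p,q)\<in>T (d - e). f p q e) * (\<Sum>(r,s)\<in>T e. g r s))
    = (\<Sum>(p,q,r,s)\<in>Q d. f p q (r + s) * g r s)"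
proof -
  have "(\<Sum>e\<le>d. (\<Sum>(p,q)\<in>T (d - e). f p q e) * (\<Sum>(r,s)\<in>T e. g r s))
      = (\<Sum>e\<le>d. \<Sum>x\<in>T (d - e) \<times> T e. (case fst x of (p,q) \<Rightarrow> f p q e) * (case snd x of (r,s) \<Rightarrow> g r s))"
    by (intro sum.cong refl) (simp add: sum_product sum.cartesian_product' case_prod_unfold)
  also have "\<dots> = (\<Sum>(e,x)\<in>Sigma {..d} (\<lambda>e. T (d - e) \<times> T e). (case fst x of (p,q) \<Rightarrow> f p q e) * (case snd x of (r,s) \<Rightarrow> g r s))"
    by (subst sum.Sigma) auto
  also have "\<dots> = (\<Sum>(p,q,r,s)\<in>Q d. f p q (r + s) * g r s)"
    by (rule sum.reindex_bij_witness[where i = "\<lambda>(p,q,r,s). (r + s, ((p,q),(r,s)))"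
          and j = "\<lambda>(e,((p,q),(r,s))). (p,q,r,s)"]) (auto simp: Q_def T_def)
  finally show ?thesis .
qed

lemma act_mult:
  "Lf (ag z) (ser_mult u v) d = (\<Sum>e\<le>d. Lf (ag (z + of_nat e)) u (d - e) * Lf (ag z) v e)"
proof -
  have "Lf (ag z) (ser_mult u v) d = (\<Sum>(p,q,r,s)\<in>Q d. (u p q * pochhammer (z + of_nat (r + s) + of_nat q) p)
      * (v r s * pochhammer (z + of_nat s) r))"
    unfolding Lf_mult by (intro sum.cong refl) (auto simp: act_mm Q_def algebra_simps)
  also have "\<dots> = (\<Sum>e\<le>d. (\<Sum>(p,q)\<in>T (d - e). u p q * pochhammer (z + of_nat e + of_nat q) p) *
      (\<Sum>(r,s)\<in>T e. v r s * pochhammer (z + of_nat s) r))"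
    by (rule G_lemma[symmetric])
  also have "\<dots> = (\<Sum>e\<le>d. Lf (ag (z + of_nat e)) u (d - e) * Lf (ag z) v e)"
    unfolding Lf_def ag_def by simp
  finally show ?thesis .
qed

lemma neg1_sq: "(-1::complex) ^ q * (-1) ^ q = 1"
  by (induction q) auto

lemma act_F: "Lf (ag z) (F_conv w) d = Lf (fg z) w d"
proof -
  have "Lf (ag z) (F_conv w) d = (\<Sum>(p,q)\<in>T d. w p q * ((-1) ^ q * pochhammer z p))"
    unfolding Lf_F by (intro sum.cong refl) (auto simp: act_mm T_def)
  also have "\<dots> = Lf (fg z) w d" by (simp add: Lf_def fg_def)
  finally show ?thesis .
qed

lemma actF_F: "Lf (fg z) (F_conv w) d = Lf (ag z) w d"
proof -
  have "Lf (fg z) (F_conv w) d = (\<Sum>(p,q)\<in>T d. ((-1) ^ q * (-1) ^ q) * (w p q * pochhammer (z + of_nat q) p))"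
    unfolding Lf_F by (intro sum.cong refl) (auto simp: actF_mm T_def)
  also have "\<dots> = Lf (ag z) w d" by (simp add: neg1_sq Lf_def ag_def)
  finally show ?thesis .
qed

lemma FF: "F_conv (F_conv w) = w"
  by (rule faithful_eq) (simp add: act_F actF_F)

lemma F_antihom: "F_conv (ser_mult x y) = ser_mult (F_conv y) (F_conv x)"
proof (rule faithful_eq)
  fix d z
  have "Lf (ag z) (F_conv (ser_mult x y)) d = (\<Sum>(p,q,r,s)\<in>Q d. x p q * y r s * ((-1) ^ (q + s) * pochhammer z p * pochhammer (z + of_nat (p + q)) r))"
    unfolding act_F Lf_mult by (intro sum.cong refl) (auto simp: actF_mm Q_def)
  also have "\<dots> = (\<Sum>(p,q,r,s)\<in>Q d. (y p q * ((-1) ^ q * pochhammer (z + of_nat (r + s)) p)) * (x r s * ((-1) ^ s * pochhammer z r)))"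
    by (rule sum.reindex_bij_witness[where i = "\<lambda>(p,q,r,s). (r,s,p,q)" and j = "\<lambda>(p,q,r,s). (r,s,p,q)"])
       (auto simp: Q_def power_add)
  also have "\<dots> = (\<Sum>e\<le>d. (\<Sum>(p,q)\<in>T (d - e). y p q * ((-1) ^ q * pochhammer (z + of_nat e) p)) *
      (\<Sum>(r,s)\<in>T e. x r s * ((-1) ^ s * pochhammer z r)))"
    by (rule G_lemma[symmetric])
  also have "\<dots> = (\<Sum>e\<le>d. Lf (ag (z + of_nat e)) (F_conv y) (d - e) * Lf (ag z) (F_conv x) e)"
    by (simp only: act_F) (simp add: Lf_def fg_def)
  also have "\<dots> = Lf (ag z) (ser_mult (F_conv y) (F_conv x)) d"
    by (rule act_mult[symmetric])
  finally show "Lf (ag z) (F_conv (ser_mult x y)) d = Lf (ag z) (ser_mult (F_conv y) (F_conv x)) d" .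
qed

lemma card_T: "card (T d) \<le> 2 ^ d"
proof -
  have "T d = (\<lambda>k. (k, d - k)) ` {..d}" by (auto simp: T_def image_iff)
  then have "card (T d) \<le> card {..d}" by (metis card_image_le finite_atMost)
  also have "\<dots> \<le> 2 ^ d" using less_exp[of d] by (simp add: Suc_le_eq)
  finally show ?thesis .
qed

lemma F_bound:
  assumes C: "0 \<le> C" and R: "0 \<le> R" and g: "\<And>p q. cmod (g p q) \<le> C * R ^ (p + q) * fact q"
  shows "cmod (F_conv g m n) \<le> C * (4 * R) ^ (m + n) * fact n"
proof -
  define d where "d = m + n"
  have tm: "cmod ((-1) ^ q * g p q * mm 0 q p 0 m n) \<le> C * R ^ d * 2 ^ d * fact n"
    if "(p, q) \<in> T d" for p q
  proof -
    have pq: "p + q = d" using that by (simp add: T_def)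
    have "cmod ((-1) ^ q * g p q * mm 0 q p 0 m n) = cmod (g p q) * cmod (mm 0 q p 0 m n)"
      by (simp add: norm_mult norm_power)
    also have "\<dots> \<le> (C * R ^ d * fact q) * cmod (mm 0 q p 0 m n)"
      using g[of p q] pq by (intro mult_right_mono) auto
    also have "\<dots> = C * R ^ d * (cmod (mm 0 q p 0 m n) * fact q * fact 0)" by simp
    also have "\<dots> \<le> C * R ^ d * (2 ^ p * fact n)"
      using mm_bound[of 0 q p 0 m n] C R by (intro mult_left_mono) auto
    also have "\<dots> \<le> C * R ^ d * (2 ^ d * fact n)"
    proof -
      have "(2::real) ^ p \<le> 2 ^ d" using pq by (intro power_increasing) auto
      then show ?thesis using C R by (intro mult_left_mono mult_right_mono) auto
    qed
    finally show ?thesis by (simp add: mult_ac)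
  qed
  have "cmod (F_conv g m n) \<le> (\<Sum>(p,q)\<in>T d. cmod ((-1) ^ q * g p q * mm 0 q p 0 m n))"
    unfolding F_fin d_def[symmetric] case_prod_unfold by (rule norm_sum)
  also have "\<dots> \<le> of_nat (card (T d)) * (C * R ^ d * 2 ^ d * fact n)"
    by (rule sum_bounded_above) (use tm in auto)
  also have "\<dots> \<le> 2 ^ d * (C * R ^ d * 2 ^ d * fact n)"
  proof (rule mult_right_mono)
    have "real (card (T d)) \<le> real (2 ^ d)" using card_T[of d] by (simp only: of_nat_le_iff)
    then show "real (card (T d)) \<le> 2 ^ d" by simp
    show "0 \<le> C * R ^ d * 2 ^ d * fact n" using C R by simp
  qed
  also have "\<dots> = C * (4 * R) ^ d * fact n"
  proof -
    have "(4::real) ^ d = 2 ^ d * 2 ^ d" by (simp flip: power_mult_distrib)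
    then show ?thesis by (simp add: power_mult_distrib mult_ac)
  qed
  finally show ?thesis by (simp add: d_def)
qed



lemma F_add: "F_conv (ser_add x y) = ser_add (F_conv x) (F_conv y)"
  by (intro ext) (simp add: F_fin ser_add_def case_prod_unfold algebra_simps sum.distrib)

lemma F_scale: "F_conv (ser_scale c x) = ser_scale c (F_conv x)"
  by (intro ext) (simp add: F_fin ser_scale_def case_prod_unfold algebra_simps sum_distrib_left)

lemma convE:
  assumes "x \<in> conv"
  obtains R C where "R > 1" "C \<ge> 0" "\<And>p q. cmod (x p q) \<le> C * R ^ (p + q) * fact q"
proof -
  from assms obtain R C where R: "R > 1" and b: "\<And>p q. cmod (x p q) \<le> C * R ^ (p + q) * fact q"
    unfolding conv_def by blast
  have "cmod (x 0 0) \<le> C" using b[of 0 0] by simp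
  then have "0 \<le> C" using norm_ge_zero[of "x 0 0"] by linarith
  with R b show ?thesis using that by blast
qed

lemma convI: "R > 1 \<Longrightarrow> (\<And>p q. cmod (x p q) \<le> C * R ^ (p + q) * fact q) \<Longrightarrow> x \<in> conv"
  unfolding conv_def by blast

lemma conv_add: assumes "x \<in> conv" "y \<in> conv" shows "ser_add x y \<in> conv"
proof -
  obtain R1 C1 where 1: "R1 > 1" "C1 \<ge> 0" "\<And>p q. cmod (x p q) \<le> C1 * R1 ^ (p + q) * fact q"
    using convE[OF assms(1)] by blast
  obtain R2 C2 where 2: "R2 > 1" "C2 \<ge> 0" "\<And>p q. cmod (y p q) \<le> C2 * R2 ^ (p + q) * fact q"
    using convE[OF assms(2)] by blast
  show ?thesis
  proof (rule convI[of "max R1 R2" _ "C1 + C2"])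
    show "1 < max R1 R2" using 1 by simp
    fix p q
    have a: "R1 ^ (p + q) \<le> max R1 R2 ^ (p + q)" "R2 ^ (p + q) \<le> max R1 R2 ^ (p + q)"
      using 1 2 by (auto intro!: power_mono)
    have "C1 * R1 ^ (p + q) * fact q \<le> C1 * max R1 R2 ^ (p + q) * fact q"
      using a 1 by (intro mult_right_mono mult_left_mono) auto
    moreover have "C2 * R2 ^ (p + q) * fact q \<le> C2 * max R1 R2 ^ (p + q) * fact q"
      using a 2 by (intro mult_right_mono mult_left_mono) auto
    moreover have "cmod (ser_add x y p q) \<le> cmod (x p q) + cmod (y p q)"
      by (simp add: ser_add_def norm_triangle_ineq)
    ultimately show "cmod (ser_add x y p q) \<le> (C1 + C2) * max R1 R2 ^ (p + q) * fact q"
      using 1(3)[of p q] 2(3)[of p q] by (simp add: algebra_simps)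
  qed
qed

lemma conv_scale: assumes "x \<in> conv" shows "ser_scale c x \<in> conv"
proof -
  obtain R C where 1: "R > 1" "C \<ge> 0" "\<And>p q. cmod (x p q) \<le> C * R ^ (p + q) * fact q"
    using convE[OF assms(1)] by blast
  show ?thesis
  proof (rule convI[of R _ "cmod c * C"])
    show "1 < R" using 1 by simp
    fix p q
    show "cmod (ser_scale c x p q) \<le> cmod c * C * R ^ (p + q) * fact q"
      using mult_left_mono[OF 1(3)[of p q], of "cmod c"] by (simp add: ser_scale_def norm_mult mult_ac)
  qed
qed

lemma abs_convex_conv: "abs_convex conv"
  unfolding abs_convex_def by (auto intro: conv_add conv_scale)

lemma ball_conv: "R > 1 \<Longrightarrow> step_ball R e \<subseteq> conv"
  unfolding step_ball_def by (auto intro: convI)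

lemma F_conv_in: assumes "x \<in> conv" shows "F_conv x \<in> conv"
proof -
  obtain R C where 1: "R > 1" "C \<ge> 0" "\<And>p q. cmod (x p q) \<le> C * R ^ (p + q) * fact q"
    using convE[OF assms(1)] by blast
  show ?thesis
    by (rule convI[of "4 * R" _ C]) (use 1 F_bound[OF 1(2) _ 1(3)] in auto)
qed

lemma F_ball: assumes "R > 1" "e \<ge> 0" shows "F_conv ` step_ball R e \<subseteq> step_ball (4 * R) e"
proof (rule image_subsetI)
  fix x assume "x \<in> step_ball R e"
  then have b: "\<And>p q. cmod (x p q) \<le> e * R ^ (p + q) * fact q" by (simp add: step_ball_def)
  show "F_conv x \<in> step_ball (4 * R) e"
    unfolding step_ball_def using F_bound[OF assms(2) _ b] assms by auto
qed

lemma step_ball_mono: "e1 \<le> e2 \<Longrightarrow> R \<ge> 0 \<Longrightarrow> step_ball R e1 \<subseteq> step_ball R e2"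
proof (clarsimp simp: step_ball_def)
  fix x p q assume "e1 \<le> e2" "0 \<le> R" "\<forall>p q. cmod (x p q) \<le> e1 * R ^ (p + q) * fact q"
  moreover have "e1 * R ^ (p + q) * fact q \<le> e2 * R ^ (p + q) * fact q"
    using calculation by (intro mult_right_mono) auto
  ultimately show "cmod (x p q) \<le> e2 * R ^ (p + q) * fact q" by (meson order_trans)
qed

lemma istop: "istopology conv_open"
  unfolding istopology_def
proof (intro conjI allI impI)
  fix S U assume S: "conv_open S" and U: "conv_open U"
  show "conv_open (S \<inter> U)"
    unfolding conv_open_def
  proof (intro conjI ballI)
    show "S \<inter> U \<subseteq> conv" using S unfolding conv_open_def by blast
    fix x assume x: "x \<in> S \<inter> U"
    obtain N1 where N1: "conv_nhd0 N1" "\<forall>n\<in>N1. ser_add x n \<in> S" using S x unfolding conv_open_def by blast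
    obtain N2 where N2: "conv_nhd0 N2" "\<forall>n\<in>N2. ser_add x n \<in> U" using U x unfolding conv_open_def by blast
    obtain W1 where W1: "W1 \<subseteq> N1" "W1 \<subseteq> conv" "abs_convex W1" "\<forall>R>1. \<exists>e>0. step_ball R e \<subseteq> W1"
      using N1 unfolding conv_nhd0_def by blast
    obtain W2 where W2: "W2 \<subseteq> N2" "W2 \<subseteq> conv" "abs_convex W2" "\<forall>R>1. \<exists>e>0. step_ball R e \<subseteq> W2"
      using N2 unfolding conv_nhd0_def by blast
    have "conv_nhd0 (N1 \<inter> N2)"
      unfolding conv_nhd0_def
    proof (intro exI[of _ "W1 \<inter> W2"] conjI allI impI)
      show "W1 \<inter> W2 \<subseteq> N1 \<inter> N2" "W1 \<inter> W2 \<subseteq> conv" using W1 W2 by auto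
      show "abs_convex (W1 \<inter> W2)" unfolding abs_convex_def
      proof (intro ballI allI impI)
        fix u v s t assume uv: "u \<in> W1 \<inter> W2" "v \<in> W1 \<inter> W2" "cmod s + cmod t \<le> 1"
        have "ser_add (ser_scale s u) (ser_scale t v) \<in> W1"
          using W1(3)[unfolded abs_convex_def, rule_format, of u v s t] uv by simp
        moreover have "ser_add (ser_scale s u) (ser_scale t v) \<in> W2"
          using W2(3)[unfolded abs_convex_def, rule_format, of u v s t] uv by simp
        ultimately show "ser_add (ser_scale s u) (ser_scale t v) \<in> W1 \<inter> W2" by simp
      qed
      fix R :: real assume R: "R > 1"
      obtain e1 where e1: "e1 > 0" "step_ball R e1 \<subseteq> W1" using W1(4) R by blast
      obtain e2 where e2: "e2 > 0" "step_ball R e2 \<subseteq> W2" using W2(4) R by blast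
      have "step_ball R (min e1 e2) \<subseteq> W1 \<inter> W2"
        using step_ball_mono[of "min e1 e2" e1 R] step_ball_mono[of "min e1 e2" e2 R] e1 e2 R by auto
      then show "\<exists>e>0. step_ball R e \<subseteq> W1 \<inter> W2" using e1 e2 by (intro exI[of _ "min e1 e2"]) auto
    qed
    moreover have "\<forall>n\<in>N1 \<inter> N2. ser_add x n \<in> S \<inter> U" using N1(2) N2(2) by simp
    ultimately show "\<exists>N. conv_nhd0 N \<and> (\<forall>n\<in>N. ser_add x n \<in> S \<inter> U)" by (intro exI[of _ "N1 \<inter> N2"]) simp
  qed
next
  fix K assume K: "\<forall>S\<in>K. conv_open S"
  show "conv_open (\<Union>K)"
    unfolding conv_open_def
  proof (intro conjI ballI)
    show "\<Union>K \<subseteq> conv"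
    proof
      fix x assume "x \<in> \<Union>K"
      then obtain S where "S \<in> K" "x \<in> S" by blast
      then show "x \<in> conv" using K unfolding conv_open_def by auto
    qed
    fix x assume "x \<in> \<Union>K"
    then obtain S where S: "S \<in> K" "x \<in> S" by blast
    then have "conv_open S" using K by simp
    then obtain N where N: "conv_nhd0 N" "\<forall>n\<in>N. ser_add x n \<in> S" using S unfolding conv_open_def by blast
    have "\<forall>n\<in>N. ser_add x n \<in> \<Union>K" using N(2) S(1) by blast
    then show "\<exists>N. conv_nhd0 N \<and> (\<forall>n\<in>N. ser_add x n \<in> \<Union>K)" using N(1) by blast
  qed
qed

lemma openin_conv: "openin conv_topology = conv_open"
  unfolding conv_topology_def using istop by simp

lemma conv_open_conv: "conv_open conv"
  unfolding conv_open_def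
proof (intro conjI ballI)
  fix x assume x: "x \<in> conv"
  have "conv_nhd0 conv"
    unfolding conv_nhd0_def
    by (intro exI[of _ conv]) (auto simp: abs_convex_conv intro!: exI[of _ 1] ball_conv)
  then show "\<exists>N. conv_nhd0 N \<and> (\<forall>n\<in>N. ser_add x n \<in> conv)" using x by (blast intro: conv_add)
qed simp

lemma topspace_conv: "topspace conv_topology = conv"
  unfolding topspace_def openin_conv using conv_open_conv unfolding conv_open_def by blast

lemma F_cont: "continuous_map conv_topology conv_topology F_conv"
  unfolding continuous_map_def topspace_conv openin_conv
proof (intro conjI allI impI)
  show "F_conv \<in> conv \<rightarrow> conv" using F_conv_in by blast
  fix U assume U: "conv_open U"
  show "conv_open {x \<in> conv. F_conv x \<in> U}"
    unfolding conv_open_def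
  proof (intro conjI ballI)
    show "{x \<in> conv. F_conv x \<in> U} \<subseteq> conv" by blast
    fix x assume x: "x \<in> {x \<in> conv. F_conv x \<in> U}"
    obtain N where N: "conv_nhd0 N" "\<forall>n\<in>N. ser_add (F_conv x) n \<in> U"
      using U x unfolding conv_open_def by blast
    obtain W where W: "W \<subseteq> N" "W \<subseteq> conv" "abs_convex W" "\<forall>R>1. \<exists>e>0. step_ball R e \<subseteq> W"
      using N unfolding conv_nhd0_def by blast
    define N' where "N' = {v \<in> conv. F_conv v \<in> W}"
    have "conv_nhd0 N'"
      unfolding conv_nhd0_def
    proof (intro exI[of _ N'] conjI allI impI)
      show "N' \<subseteq> N'" "N' \<subseteq> conv" by (auto simp: N'_def)
      show "abs_convex N'" unfolding abs_convex_def
      proof (intro ballI allI impI)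
        fix u v s t assume uv: "u \<in> N'" "v \<in> N'" "cmod s + cmod t \<le> 1"
        have "ser_add (ser_scale s (F_conv u)) (ser_scale t (F_conv v)) \<in> W"
          using W(3)[unfolded abs_convex_def, rule_format, of "F_conv u" "F_conv v" s t] uv
          by (simp add: N'_def)
        moreover have "ser_add (ser_scale s u) (ser_scale t v) \<in> conv"
          using uv by (simp add: N'_def conv_add conv_scale)
        ultimately show "ser_add (ser_scale s u) (ser_scale t v) \<in> N'"
          by (simp add: N'_def F_add F_scale)
      qed
      fix R :: real assume R: "R > 1"
      have "4 * R > 1" using R by simp
      then obtain e where e: "e > 0" "step_ball (4 * R) e \<subseteq> W" using W(4) by blast
      have "step_ball R e \<subseteq> N'"
      proof
        fix v assume v: "v \<in> step_ball R e"
        then have "F_conv v \<in> step_ball (4 * R) e" using F_ball[of R e] e R by auto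
        then show "v \<in> N'" using e v ball_conv[OF R, of e] unfolding N'_def by auto
      qed
      then show "\<exists>e>0. step_ball R e \<subseteq> N'" using e by blast
    qed
    moreover have "\<forall>n\<in>N'. ser_add x n \<in> {x \<in> conv. F_conv x \<in> U}"
    proof
      fix n assume n: "n \<in> N'"
      then have "F_conv n \<in> N" "n \<in> conv" using W(1) by (auto simp: N'_def)
      then show "ser_add x n \<in> {x \<in> conv. F_conv x \<in> U}"
        using x N(2) by (simp add: F_add conv_add)
    qed
    ultimately show "\<exists>N. conv_nhd0 N \<and> (\<forall>n\<in>N. ser_add x n \<in> {x \<in> conv. F_conv x \<in> U})"
      by (intro exI[of _ N']) simp
  qed
qed


lemma F_mon: "F_conv (mon p q) = ser_scale ((-1) ^ q) (ser_mult (mon 0 q) (mon p 0))"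
proof (intro ext)
  fix m n
  have "F_conv (mon p q) m n = (\<Sum>x\<in>T (m+n). if x = (p,q) then (-1) ^ q * mm 0 q p 0 m n else 0)"
    unfolding F_fin by (intro sum.cong refl) (auto simp: mon_def split: if_splits)
  also have "\<dots> = (-1) ^ q * mm 0 q p 0 m n"
    by (subst sum.delta[OF finite_T]) (auto simp: T_def mm_deg')
  finally show "F_conv (mon p q) m n = ser_scale ((-1) ^ q) (ser_mult (mon 0 q) (mon p 0)) m n"
    by (simp add: ser_scale_def mon_mult)
qed

theorem corollary1p1p4:
  shows "bij_betw F_conv conv conv
    \<and> continuous_map conv_topology conv_topology F_conv
    \<and> (\<forall>x\<in>conv. \<forall>y\<in>conv. F_conv (ser_add x y) = ser_add (F_conv x) (F_conv y))
    \<and> (\<forall>c. \<forall>x\<in>conv. F_conv (ser_scale c x) = ser_scale c (F_conv x))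
    \<and> (\<forall>x\<in>conv. \<forall>y\<in>conv. F_conv (ser_mult x y) = ser_mult (F_conv y) (F_conv x))
    \<and> F_conv (mon 0 0) = mon 0 0
    \<and> F_conv (mon 1 0) = mon 1 0
    \<and> F_conv (mon 0 1) = ser_scale (-1) (mon 0 1)
    \<and> (\<forall>p q. F_conv (mon p q) = ser_scale ((-1) ^ q) (ser_mult (mon 0 q) (mon p 0)))"
proof (intro conjI ballI allI)
  show "bij_betw F_conv conv conv"
    by (rule bij_betw_byWitness[where f' = F_conv]) (auto simp: FF F_conv_in)
  show "continuous_map conv_topology conv_topology F_conv" by (rule F_cont)
  show "F_conv (mon 0 0) = mon 0 0"
    by (simp add: F_mon mon_mult ser_scale_def)
  show "F_conv (mon 1 0) = mon 1 0"
    by (simp add: F_mon mon_mult ser_scale_def)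
  show "F_conv (mon 0 1) = ser_scale (-1) (mon 0 1)"
    by (simp add: F_mon mon_mult)
qed (simp_all add: F_add F_scale F_antihom F_mon)

end
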